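(* Let $p$ be a prime, let $t$ be a positive integer with $t\mid(p-1)$, let $Q\in\mathbb{F}_p[x,y]$, and let $$P(x,y)=f_n(x)y^n+\dots+f_1(x)y+f_0(x)\in\mathbb{F}_p[x,y]$$ be an irreducible polynomial of bidegree $(m,n)$ with $n\geqslant 1$ (so $f_n\neq 0$, $\deg f_i\leqslant m$). If $P(x,y)$ divides $Q(x,y^t)$ in $\mathbb{F}_p[x,y]$, then $P(x,0)^{\lfloor t/n\rfloor}$ divides $Q(x,0)$ in $\mathbb{F}_p[x]$.
   Context: $\lfloor s\rfloor$ denotes the integer part of a real number $s$. *)

theory Defs
  imports "HOL-Computational_Algebra.Computational_Algebra" "HOL-Library.Cardinality"
begin

end

theory Submission
  imports Defs
begin

lemma fermat_fin:
  fixes a :: "'a::{field,finite}"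
  assumes "a \<noteq> 0"
  shows "a ^ (CARD('a) - 1) = 1"
proof -
  let ?A = "UNIV - {0::'a}"
  have inj: "inj_on (\<lambda>x. a * x) ?A" using assms by (auto simp: inj_on_def)
  have img: "(\<lambda>x. a * x) ` ?A = ?A"
  proof
    show "(\<lambda>x. a * x) ` ?A \<subseteq> ?A" using assms by auto
    show "?A \<subseteq> (\<lambda>x. a * x) ` ?A"
    proof
      fix y assume "y \<in> ?A"
      then have "y = a * (y / a)" "y / a \<in> ?A" using assms by auto
      then show "y \<in> (\<lambda>x. a * x) ` ?A" by blast
    qed
  qed
  have "prod (\<lambda>x. a * x) ?A = prod id ?A"
    using prod.reindex[OF inj, of id] img by simp
  moreover have "prod (\<lambda>x. a * x) ?A = a ^ card ?A * prod id ?A"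
    by (simp add: prod.distrib)
  moreover have "prod id ?A \<noteq> 0" by simp
  moreover have "card ?A = CARD('a) - 1"
    by (simp add: card_Diff_singleton)
  ultimately show ?thesis by simp
qed

lemma card_pow_eq_le:
  fixes g :: "'a::{field,finite}"
  assumes "k \<ge> 1"
  shows "card {x. x ^ k = g} \<le> k"
proof -
  let ?p = "monom 1 k + [:-g:] :: 'a poly"
  have deg: "degree ?p = k"
    using assms by (subst degree_add_eq_left) (auto simp: degree_monom_eq)
  then have "?p \<noteq> 0" using assms by auto
  then have "card {x. poly ?p x = 0} \<le> degree ?p" by (rule card_poly_roots_bound)
  moreover have "{x. poly ?p x = 0} = {x. x ^ k = g}" by (auto simp: poly_monom)
  ultimately show ?thesis using deg by simp
qed

lemma many_roots_unity:
  assumes "t > 0" "t dvd (CARD('a::{field,finite}) - 1)"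
  shows "t \<le> card {c::'a. c ^ t = 1}"
proof -
  define G where "G = {c::'a. c ^ t = 1}"
  obtain k where k: "CARD('a) - 1 = t * k" using assms by blast
  have c2: "CARD('a) \<ge> 2"
  proof -
    have "{0::'a, 1} \<subseteq> UNIV" by auto
    then have "card {0::'a,1} \<le> CARD('a)" by (intro card_mono) auto
    then show ?thesis by simp
  qed
  then have k1: "k \<ge> 1" using k by (cases k) auto
  have sub: "UNIV - {0::'a} \<subseteq> (\<Union>g\<in>G. {a. a ^ k = g})"
  proof
    fix a :: 'a assume "a \<in> UNIV - {0}"
    then have "a ^ (CARD('a) - 1) = 1" by (intro fermat_fin) auto
    then have "(a ^ k) ^ t = 1" using k by (simp add: power_mult[symmetric] mult.commute)
    then show "a \<in> (\<Union>g\<in>G. {a. a ^ k = g})" by (auto simp: G_def)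
  qed
  have "CARD('a) - 1 = card (UNIV - {0::'a})" by (simp add: card_Diff_singleton)
  also have "\<dots> \<le> card (\<Union>g\<in>G. {a. a ^ k = g})" by (intro card_mono sub) auto
  also have "\<dots> \<le> (\<Sum>g\<in>G. card {a. a ^ k = g})" by (rule card_UN_le) auto
  also have "\<dots> \<le> (\<Sum>g\<in>G. k)" by (intro sum_mono card_pow_eq_le k1)
  also have "\<dots> = card G * k" by simp
  finally have "t * k \<le> card G * k" using k by simp
  then show ?thesis using k1 unfolding G_def by simp
qed

lemma select_sep:
  fixes A :: "'b set"
  assumes "finite A" "\<And>a. a \<in> A \<Longrightarrow> card {d\<in>A. R a d} \<le> n"
    "\<And>a. R a a" "\<And>a b. R a b \<Longrightarrow> R b a"
  shows "\<exists>S\<subseteq>A. card A \<le> n * card S \<and> (\<forall>c\<in>S. \<forall>d\<in>S. c \<noteq> d \<longrightarrow> \<not> R c d)"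
  using assms(1,2)
proof (induction A rule: finite_psubset_induct)
  case (psubset A)
  show ?case
  proof (cases "A = {}")
    case True then show ?thesis by auto
  next
    case False
    then obtain a where a: "a \<in> A" by auto
    define B where "B = {d\<in>A. R a d}"
    define A' where "A' = A - B"
    have aB: "a \<in> B" using a assms(3) by (simp add: B_def)
    have "A' \<subset> A" using aB a by (auto simp: A'_def B_def)
    moreover have "\<And>x. x \<in> A' \<Longrightarrow> card {d\<in>A'. R x d} \<le> n"
    proof -
      fix x assume "x \<in> A'"
      then have "card {d\<in>A. R x d} \<le> n" using psubset.prems by (auto simp: A'_def)
      moreover have "card {d\<in>A'. R x d} \<le> card {d\<in>A. R x d}"
        using psubset.hyps(1) by (intro card_mono) (auto simp: A'_def)
      ultimately show "card {d\<in>A'. R x d} \<le> n" by simp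
    qed
    ultimately obtain S' where S': "S' \<subseteq> A'" "card A' \<le> n * card S'"
      "\<forall>c\<in>S'. \<forall>d\<in>S'. c \<noteq> d \<longrightarrow> \<not> R c d"
      using psubset.IH[of A'] by blast
    have fS': "finite S'" by (rule finite_subset[OF _ psubset.hyps(1)]) (use S'(1) in \<open>auto simp: A'_def\<close>)
    have aS': "a \<notin> S'" using S'(1) aB by (auto simp: A'_def)
    have BA: "B \<subseteq> A" by (auto simp: B_def)
    have "card A' = card A - card B"
      unfolding A'_def using psubset.hyps(1) BA by (intro card_Diff_subset) (auto intro: finite_subset)
    moreover have "card B \<le> card A" using psubset.hyps(1) BA by (intro card_mono)
    ultimately have "card A = card B + card A'" by simp
    also have "\<dots> \<le> n + n * card S'" using psubset.prems[OF a] S'(2) by (simp add: B_def)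
    also have "\<dots> = n * card (insert a S')" using fS' aS' by simp
    finally have c: "card A \<le> n * card (insert a S')" .
    have na: "\<And>d. d \<in> S' \<Longrightarrow> \<not> R a d" using S'(1) by (auto simp: A'_def B_def)
    have "\<forall>c\<in>insert a S'. \<forall>d\<in>insert a S'. c \<noteq> d \<longrightarrow> \<not> R c d"
    proof (intro ballI impI)
      fix c d assume "c \<in> insert a S'" "d \<in> insert a S'" "c \<noteq> d"
      then show "\<not> R c d" using na S'(3) assms(4)[of c a] by blast
    qed
    moreover have "insert a S' \<subseteq> A" using S'(1) a by (auto simp: A'_def)
    ultimately show ?thesis using c by blast
  qed
qed

definition sc :: "'a::field \<Rightarrow> 'a poly poly \<Rightarrow> 'a poly poly" where
  "sc c P = pcompose P [:0, [:c:]:]"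

lemma coeff_sc: "coeff (sc c P) i = [:c ^ i:] * coeff P i"
  unfolding sc_def coeff_pcompose_linear by (simp add: poly_const_pow)

lemma sc_mult: "sc c (a * b) = sc c a * sc c b"
  unfolding sc_def by (rule pcompose_mult)

lemma sc_sc: "sc c (sc d P) = sc (c * d) P"
  by (rule poly_eqI) (simp add: coeff_sc power_mult_distrib mult.assoc mult.commute)

lemma sc_1: "sc 1 P = P"
  by (rule poly_eqI) (simp add: coeff_sc)

lemma sc_dvd: "a dvd b \<Longrightarrow> sc c a dvd sc c b"
  by (metis dvd_def sc_mult)

lemma sc_inv: "c \<noteq> 0 \<Longrightarrow> sc (inverse c) (sc c P) = P"
  by (simp add: sc_sc sc_1)

lemma sc_dvd_iff: "c \<noteq> 0 \<Longrightarrow> sc c a dvd sc c b \<longleftrightarrow> a dvd b"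
  by (metis sc_dvd sc_inv)

lemma sc_eq_0_iff: "c \<noteq> 0 \<Longrightarrow> sc c a = 0 \<longleftrightarrow> a = 0"
  by (metis sc_inv sc_def pcompose_0)

lemma sc_one: "sc c 1 = 1"
  unfolding sc_def by (rule pcompose_1)

lemma sc_prime:
  assumes "c \<noteq> 0" "prime_elem P"
  shows "prime_elem (sc c P)"
proof -
  have "sc c P \<noteq> 0" using assms sc_eq_0_iff prime_elem_def by blast
  moreover have "\<not> sc c P dvd 1"
    using assms sc_dvd_iff[of c P 1] sc_one prime_elem_def by metis
  moreover have "sc c P dvd a \<or> sc c P dvd b" if "sc c P dvd a * b" for a b
  proof -
    have "sc (inverse c) (sc c P) dvd sc (inverse c) a * sc (inverse c) b"
      using sc_dvd[OF that] sc_mult by metis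
    then have "P dvd sc (inverse c) a \<or> P dvd sc (inverse c) b"
      using assms sc_inv prime_elem_dvd_mult_iff by metis
    then show ?thesis
      using assms sc_dvd[of P _ c] sc_sc[of c "inverse c"] sc_1 by (metis right_inverse)
  qed
  ultimately show ?thesis by (simp add: prime_elem_def)
qed

lemma sc_coeff0: "coeff (sc c P) 0 = coeff P 0"
  by (simp add: coeff_sc)

lemma sc_fix:
  assumes "c \<noteq> 0" "coeff P 0 \<noteq> 0" "P dvd sc c P"
  shows "c ^ degree P = 1"
proof -
  obtain k where k: "sc c P = P * k" using assms(3) by (auto elim: dvdE)
  have P0: "P \<noteq> 0" using assms(2) by auto
  have "degree (sc c P) = degree P"
    unfolding sc_def using assms(1) by (simp add: degree_pcompose)
  moreover have k0: "k \<noteq> 0" using k P0 assms(1) sc_eq_0_iff by fastforce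
  ultimately have "degree k = 0" using k P0 by (simp add: degree_mult_eq)
  then have kc: "k = [:coeff k 0:]" by (metis degree_0_id)
  have "coeff P 0 = coeff P 0 * coeff k 0"
    using arg_cong[OF k, of "\<lambda>x. coeff x 0"] by (simp add: sc_coeff0 coeff_mult_0)
  then have "coeff k 0 = 1" using assms(2)
    by (metis mult_cancel_left1)
  then have "k = 1" using kc by (simp add: one_pCons)
  then have "sc c P = P" using k by simp
  then have "[:c ^ degree P:] * lead_coeff P = lead_coeff P"
    by (metis coeff_sc)
  then have "smult (c ^ degree P - 1) (lead_coeff P) = 0" by (simp add: smult_diff_left)
  then show ?thesis using P0 by simp
qed

lemma gauss_step:
  fixes \<pi> :: "'b::idom" and U V :: "'b poly"
  assumes pr: "prime_elem \<pi>" and dv: "[:\<pi>:] dvd U * V"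
  shows "[:\<pi>:] dvd U \<or> [:\<pi>:] dvd V"
proof (rule ccontr)
  assume "\<not> ?thesis"
  then have "\<exists>i. \<not> \<pi> dvd coeff U i" "\<exists>j. \<not> \<pi> dvd coeff V j"
    by (auto simp: const_poly_dvd_iff)
  define i0 where "i0 = (LEAST i. \<not> \<pi> dvd coeff U i)"
  define j0 where "j0 = (LEAST j. \<not> \<pi> dvd coeff V j)"
  have i0: "\<not> \<pi> dvd coeff U i0" unfolding i0_def using \<open>\<exists>i. \<not> \<pi> dvd coeff U i\<close> by (metis LeastI)
  have j0: "\<not> \<pi> dvd coeff V j0" unfolding j0_def using \<open>\<exists>j. \<not> \<pi> dvd coeff V j\<close> by (metis LeastI)
  have bi: "\<pi> dvd coeff U k" if "k < i0" for k
    using not_less_Least[of k "\<lambda>i. \<not> \<pi> dvd coeff U i"] that unfolding i0_def by blast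
  have bj: "\<pi> dvd coeff V k" if "k < j0" for k
    using not_less_Least[of k "\<lambda>i. \<not> \<pi> dvd coeff V i"] that unfolding j0_def by blast
  define N where "N = i0 + j0"
  have "coeff (U * V) N = (\<Sum>k\<le>N. coeff U k * coeff V (N - k))" by (rule coeff_mult)
  also have "\<dots> = coeff U i0 * coeff V (N - i0) + (\<Sum>k\<in>{..N} - {i0}. coeff U k * coeff V (N - k))"
    by (rule sum.remove) (auto simp: N_def)
  finally have eq: "coeff (U * V) N = coeff U i0 * coeff V j0 + (\<Sum>k\<in>{..N} - {i0}. coeff U k * coeff V (N - k))"
    by (simp add: N_def)
  have "\<pi> dvd (\<Sum>k\<in>{..N} - {i0}. coeff U k * coeff V (N - k))"
  proof (rule dvd_sum)
    fix k assume k: "k \<in> {..N} - {i0}"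
    show "\<pi> dvd coeff U k * coeff V (N - k)"
    proof (cases "k < i0")
      case True then show ?thesis using bi by simp
    next
      case False
      then have "N - k < j0" using k by (auto simp: N_def)
      then show ?thesis using bj by simp
    qed
  qed
  moreover have "\<pi> dvd coeff (U * V) N" using dv by (simp add: const_poly_dvd_iff)
  ultimately have "\<pi> dvd coeff U i0 * coeff V j0" using eq by (metis dvd_add_left_iff)
  then show False using pr i0 j0 prime_elem_dvd_mult_iff by metis
qed

lemma clear_denom:
  fixes U :: "'b::idom fract poly"
  shows "\<exists>d U'. d \<noteq> 0 \<and> fract_poly U' = smult (to_fract d) U"
proof (induction U)
  case 0
  show ?case by (intro exI[of _ 1] exI[of _ 0]) simp
next
  case (pCons z V)
  then obtain d1 V' where h: "d1 \<noteq> 0" "fract_poly V' = smult (to_fract d1) V" by blast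
  obtain a b where z: "z = Fract a b" "b \<noteq> 0" by (cases z) auto
  have "fract_poly (pCons (a * d1) (smult b V')) = smult (to_fract (d1 * b)) (pCons z V)"
    using h z by (simp add: map_poly_pCons Fract_conv_to_fract field_simps)
  then show ?case using h z by (intro exI[of _ "d1 * b"] exI[of _ "pCons (a * d1) (smult b V')"]) simp
qed

lemma prime_div_ex:
  fixes d :: "'a::field poly"
  assumes "d \<noteq> 0" "\<not> is_unit d"
  shows "\<exists>\<pi>. \<pi> dvd d \<and> prime_elem \<pi>"
proof -
  define F where "F = factorial_semiring.prime_factorization (0::'a poly) (*) 1
     (\<lambda>p. smult (inverse (lead_coeff p)) p) d"
  have pF: "prod_mset F = smult (inverse (lead_coeff d)) d"
    unfolding F_def by (rule field_poly_prod_mset_prime_factorization[OF assms(1)])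
  have lc: "lead_coeff d \<noteq> 0" using assms(1) by simp
  have "F \<noteq> {#}"
  proof
    assume "F = {#}"
    then have "smult (inverse (lead_coeff d)) d = 1" using pF by simp
    then have "smult (lead_coeff d) (smult (inverse (lead_coeff d)) d) = [:lead_coeff d:]"
      by simp
    then have "d = [:lead_coeff d:]" using lc by simp
    then show False using assms(2) lc by (metis is_unit_triv)
  qed
  then obtain \<pi> where pi: "\<pi> \<in># F" by blast
  then have pe: "prime_elem \<pi>" unfolding F_def by (rule field_poly_in_prime_factorization_imp_prime)
  have "\<pi> dvd prod_mset F" using pi by (rule dvd_prod_mset)
  moreover have "prod_mset F dvd d"
  proof -
    have "d = [:lead_coeff d:] * prod_mset F" using pF lc by simp
    then show ?thesis by (rule dvdI[OF trans[OF _ mult.commute]])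
  qed
  ultimately show ?thesis using pe dvd_trans by blast
qed

lemma smult_cancel_nz:
  fixes X Y :: "'b::idom poly"
  assumes "c \<noteq> 0" "smult c X = smult c Y" shows "X = Y"
  using assms by (metis smult_eq_0_iff smult_diff_right eq_iff_diff_eq_0)

lemma descent:
  fixes X Y Z :: "'a::field poly poly" and d :: "'a poly"
  assumes "d \<noteq> 0" "smult d X = Y * Z"
  shows "\<exists>a b Y' Z'. a \<noteq> 0 \<and> b \<noteq> 0 \<and> Y = smult a Y' \<and> Z = smult b Z' \<and> X = Y' * Z'"
  using assms
proof (induction "degree d" arbitrary: d Y Z rule: less_induct)
  case less
  show ?case
  proof (cases "is_unit d")
    case True
    then obtain c where c: "d = [:c:]" "c \<noteq> 0" by (metis is_unit_polyE' monom_0)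
    define u where "u = [:inverse c:]"
    have du: "d * u = 1" "u * d = 1" using c by (simp_all add: u_def one_pCons)
    have "X = smult u (smult d X)" using du by simp
    also have "\<dots> = smult u Y * Z" using less.prems by simp
    finally have "X = smult u Y * Z" .
    moreover have "Y = smult d (smult u Y)" using du by simp
    ultimately show ?thesis using less.prems(1)
      by (intro exI[of _ d] exI[of _ 1] exI[of _ "smult u Y"] exI[of _ Z]) simp
  next
    case False
    obtain \<pi> where pi: "\<pi> dvd d" "prime_elem \<pi>" using prime_div_ex[OF less.prems(1) False] by blast
    obtain e where e: "d = \<pi> * e" using pi(1) by (auto elim: dvdE)
    have pi0: "\<pi> \<noteq> 0" using pi(2) by auto
    have e0: "e \<noteq> 0" using e less.prems(1) by auto
    have "degree \<pi> \<noteq> 0"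
      using pi(2) pi0 by (metis is_unit_iff_degree prime_elem_not_unit)
    then have deg: "degree e < degree d" using e pi0 e0 by (simp add: degree_mult_eq)
    have YZ: "Y * Z = smult \<pi> (smult e X)" using less.prems(2) e by simp
    then have "[:\<pi>:] dvd Y * Z" unfolding dvd_def by (intro exI[of _ "smult e X"]) (simp add: ac_simps)
    then have "[:\<pi>:] dvd Y \<or> [:\<pi>:] dvd Z" using gauss_step[OF pi(2)] by blast
    then show ?thesis
    proof
      assume "[:\<pi>:] dvd Y"
      then obtain Y1 where Y1: "Y = smult \<pi> Y1" by (auto elim!: dvdE)
      have "smult \<pi> (smult e X) = smult \<pi> (Y1 * Z)" using YZ Y1 by simp
      then have "smult e X = Y1 * Z" using smult_cancel_nz[OF pi0] by blast
      from less.hyps[OF deg e0 this] obtain a b Y' Z' where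
        h: "a \<noteq> 0" "b \<noteq> 0" "Y1 = smult a Y'" "Z = smult b Z'" "X = Y' * Z'" by blast
      then show ?thesis using Y1 pi0
        by (intro exI[of _ "\<pi> * a"] exI[of _ b] exI[of _ Y'] exI[of _ Z']) simp
    next
      assume "[:\<pi>:] dvd Z"
      then obtain Z1 where Z1: "Z = smult \<pi> Z1" by (auto elim!: dvdE)
      have "smult \<pi> (smult e X) = smult \<pi> (Y * Z1)" using YZ Z1 by simp
      then have "smult e X = Y * Z1" using smult_cancel_nz[OF pi0] by blast
      from less.hyps[OF deg e0 this] obtain a b Y' Z' where
        h: "a \<noteq> 0" "b \<noteq> 0" "Y = smult a Y'" "Z1 = smult b Z'" "X = Y' * Z'" by blast
      then show ?thesis using Z1 pi0
        by (intro exI[of _ a] exI[of _ "\<pi> * b"] exI[of _ Y'] exI[of _ Z']) simp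
    qed
  qed
qed


lemma unit_deg0: "is_unit (W :: 'b::idom_divide poly) \<Longrightarrow> degree W = 0"
  by (auto elim: is_unit_polyE)

lemma degree_fract_poly: "degree (fract_poly p) = degree p"
  by (rule degree_map_poly) simp

lemma irr_prime:
  fixes P :: "'a::field poly poly"
  assumes irr: "irreducible P" and deg: "degree P \<ge> 1"
  shows "prime_elem P"
proof -
  have P0: "P \<noteq> 0" using deg by auto
  have prim: "is_unit a" if ha: "[:a:] dvd P" for a
  proof -
    obtain W where W: "P = [:a:] * W" using ha unfolding dvd_def by blast
    then have "is_unit [:a:] \<or> is_unit W" using irreducibleD[OF irr] by blast
    moreover have "\<not> is_unit W"
    proof
      assume "is_unit W"
      then have "degree W = 0" by (rule unit_deg0)
      moreover have "a \<noteq> 0" using W P0 by auto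
      ultimately have "degree P = 0" using W P0 by (simp add: degree_mult_eq)
      then show False using deg by simp
    qed
    ultimately show ?thesis by (simp add: is_unit_const_poly_iff)
  qed
  have irrK: "irreducible (fract_poly P)"
  proof (rule irreducibleI)
    show "fract_poly P \<noteq> 0" using P0 by simp
    show "\<not> is_unit (fract_poly P)"
    proof
      assume "is_unit (fract_poly P)"
      then have "degree (fract_poly P) = 0" by (rule unit_deg0)
      then show False using deg by (simp add: degree_fract_poly)
    qed
  next
    fix U V assume UV: "fract_poly P = U * V"
    show "is_unit U \<or> is_unit V"
    proof (rule ccontr)
      assume nu: "\<not> (is_unit U \<or> is_unit V)"
      have U0: "U \<noteq> 0" "V \<noteq> 0" using UV P0 by auto
      have dU: "degree U \<noteq> 0" "degree V \<noteq> 0" using nu U0 is_unit_iff_degree by auto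
      obtain d1 U' where h1: "d1 \<noteq> 0" "fract_poly U' = smult (to_fract d1) U"
        using clear_denom by blast
      obtain d2 V' where h2: "d2 \<noteq> 0" "fract_poly V' = smult (to_fract d2) V"
        using clear_denom by blast
      have "fract_poly (U' * V') = fract_poly (smult (d1 * d2) P)"
        using h1 h2 UV by (simp del: fract_poly_eq_iff add: ac_simps)
      then have "smult (d1 * d2) P = U' * V'" by (simp only: fract_poly_eq_iff)
      from descent[OF _ this] h1(1) h2(1) obtain a b Y Z where
        yz: "a \<noteq> 0" "b \<noteq> 0" "U' = smult a Y" "V' = smult b Z" "P = Y * Z" by auto
      have "degree U' = degree U" "degree V' = degree V"
        using arg_cong[OF h1(2), of degree] arg_cong[OF h2(2), of degree] h1(1) h2(1)
        by (simp_all add: degree_fract_poly)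
      then have "degree Y \<noteq> 0" "degree Z \<noteq> 0" using yz dU by auto
      then have "\<not> is_unit Y" "\<not> is_unit Z" using unit_deg0[of Y] unit_deg0[of Z] by auto
      then show False using irreducibleD[OF irr yz(5)] by blast
    qed
  qed
  have prK: "prime_elem (fract_poly P)" using irrK by (rule field_poly_irreducible_imp_prime)
  have bk: "P dvd A" if hA: "fract_poly P dvd fract_poly A" for A
  proof -
    obtain C where C: "fract_poly A = fract_poly P * C" using hA unfolding dvd_def by blast
    obtain d C' where h: "d \<noteq> 0" "fract_poly C' = smult (to_fract d) C"
      using clear_denom by blast
    have "fract_poly (smult d A) = fract_poly (P * C')" using C h by (simp del: fract_poly_eq_iff add: ac_simps)
    then have "smult d A = P * C'" by (simp only: fract_poly_eq_iff)
    from descent[OF h(1) this] obtain a b Y Z where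
      yz: "a \<noteq> 0" "b \<noteq> 0" "P = smult a Y" "C' = smult b Z" "A = Y * Z" by auto
    have "[:a:] dvd P" using yz(3) by (intro dvdI[of _ _ Y]) simp
    then have "is_unit a" by (rule prim)
    then obtain c where c: "a = [:c:]" "c \<noteq> 0" by (metis is_unit_polyE' monom_0)
    have "Y = smult [:inverse c:] P" using yz(3) c by (simp flip: one_pCons)
    then have "A = P * smult [:inverse c:] Z" using yz(5) by simp
    then show ?thesis by (rule dvdI)
  qed
  show ?thesis
  proof (rule prime_elemI)
    show "P \<noteq> 0" by (fact P0)
    show "\<not> is_unit P" using deg unit_deg0[of P] by auto
  next
    fix A B assume "P dvd A * B"
    then have "fract_poly P dvd fract_poly A * fract_poly B" by (metis fract_poly_dvd fract_poly_mult)
    then have "fract_poly P dvd fract_poly A \<or> fract_poly P dvd fract_poly B"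
      using prK prime_elem_dvd_mult_iff by blast
    then show "P dvd A \<or> P dvd B" using bk by blast
  qed
qed


lemma prime_elem_dvd_prod_set:
  fixes p :: "'b::comm_semiring_1"
  assumes "prime_elem p" "finite T" "p dvd prod f T"
  shows "\<exists>x\<in>T. p dvd f x"
  using assms(2,3)
proof (induction T rule: finite_induct)
  case empty then show ?case using assms(1) prime_elem_not_unit by auto
next
  case (insert x T)
  then have "p dvd f x * prod f T" by simp
  then have "p dvd f x \<or> p dvd prod f T" using assms(1) prime_elem_dvd_mult_iff by blast
  then show ?case using insert.IH by blast
qed

theorem lemma2:
  fixes P Q :: "'a::{field,finite} poly poly" and p t m n :: nat
  assumes "prime p" and "CARD('a) = p"
    and "t > 0" and "t dvd (p - 1)"
    and "irreducible P"
    and "degree P = n" and "n \<ge> 1"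
    and "\<forall>i. degree (coeff P i) \<le> m"
    and "P dvd pcompose Q (monom 1 t)"
  shows "(coeff P 0) ^ (t div n) dvd coeff Q 0"
proof -
  define R where "R = pcompose Q (monom 1 t)"
  have R0: "poly R 0 = coeff Q 0"
    unfolding R_def using assms(3) by (simp add: poly_pcompose poly_monom poly_0_coeff_0)
  have dvd0: "poly a 0 dvd poly b 0" if "a dvd b" for a b :: "'a poly poly"
    using that by (auto elim!: dvdE simp: poly_mult)
  show ?thesis
  proof (cases "coeff P 0 = 0")
    case True
    then have "poly P 0 = 0" by (simp add: poly_0_coeff_0)
    then have "poly R 0 = 0" using dvd0[OF assms(9)[folded R_def]] by simp
    then show ?thesis using R0 by simp
  next
    case f0: False
    have prP: "prime_elem P" using irr_prime[OF assms(5)] assms(6,7) by simp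
    define G where "G = {c::'a. c ^ t = 1}"
    have tG: "t \<le> card G" unfolding G_def
      using many_roots_unity[where 'a='a, of t] assms(2,3,4) by simp
    have ball: "card {d\<in>G. c ^ n = d ^ n} \<le> n" for c
    proof -
      have "card {d\<in>G. c ^ n = d ^ n} \<le> card {d. d ^ n = c ^ n}"
        by (intro card_mono) auto
      also have "\<dots> \<le> n" using assms(7) by (rule card_pow_eq_le)
      finally show ?thesis .
    qed
    obtain S where S: "S \<subseteq> G" "card G \<le> n * card S"
      "\<forall>c\<in>S. \<forall>d\<in>S. c \<noteq> d \<longrightarrow> \<not> c ^ n = d ^ n"
      using select_sep[of G "\<lambda>c d. c ^ n = d ^ n" n] ball by auto
    have nz: "c \<noteq> 0" if "c \<in> G" for c using that assms(3) by (auto simp: G_def power_0_left)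
    have scR: "sc c R = R" if "c \<in> G" for c
    proof -
      have "sc c (monom 1 t) = monom 1 t"
        using that by (intro poly_eqI) (auto simp: coeff_sc coeff_monom G_def)
      then show ?thesis unfolding R_def sc_def by (metis pcompose_assoc)
    qed
    have dvdS: "sc c P dvd R" if "c \<in> S" for c
      using sc_dvd[OF assms(9)[folded R_def], of c] scR[of c] that S(1) by auto
    have nd: "\<not> sc c P dvd sc d P" if "c \<in> S" "d \<in> S" "c \<noteq> d" for c d
    proof
      assume h: "sc c P dvd sc d P"
      have c0: "c \<noteq> 0" "d \<noteq> 0" using nz that S(1) by auto
      have "sc (inverse c) (sc c P) dvd sc (inverse c) (sc d P)" using sc_dvd[OF h] .
      then have "P dvd sc (inverse c * d) P" using c0 by (simp add: sc_inv sc_sc sc_1)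
      then have "(inverse c * d) ^ n = 1" using sc_fix[of "inverse c * d" P] c0 f0 assms(6) by simp
      then have "d ^ n = c ^ n" using c0 by (simp add: power_mult_distrib power_inverse field_simps)
      then show False using S(3) that by metis
    qed
    have fS: "finite S" by simp
    have prodT: "T \<subseteq> S \<Longrightarrow> prod (\<lambda>c. sc c P) T dvd R" for T
    proof (induction T rule: infinite_finite_induct)
      case (infinite T) then show ?case by simp
    next
      case empty then show ?case by simp
    next
      case (insert c T)
      then have cS: "c \<in> S" and TS: "T \<subseteq> S" by auto
      have "prod (\<lambda>c. sc c P) T dvd R" using insert.IH TS by blast
      then obtain r where r: "R = prod (\<lambda>c. sc c P) T * r" unfolding dvd_def by blast
      have pc: "prime_elem (sc c P)" using sc_prime[OF nz prP] cS S(1) by auto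
      have "\<not> sc c P dvd prod (\<lambda>c. sc c P) T"
      proof
        assume "sc c P dvd prod (\<lambda>c. sc c P) T"
        then obtain d where "d \<in> T" "sc c P dvd sc d P"
          using prime_elem_dvd_prod_set[OF pc insert.hyps(1)] by blast
        then show False using nd[of c d] cS TS insert.hyps(2) by auto
      qed
      then have "sc c P dvd r" using pc dvdS[OF cS] r prime_elem_dvd_mult_iff by metis
      then have "sc c P * prod (\<lambda>c. sc c P) T dvd prod (\<lambda>c. sc c P) T * r"
        by (simp add: mult.commute mult_dvd_mono)
      then show ?case using r insert.hyps(1,2) by simp
    qed
    have "poly (prod (\<lambda>c. sc c P) S) 0 dvd poly R 0" using dvd0 prodT[of S] by simp
    moreover have "poly (prod (\<lambda>c. sc c P) S) 0 = coeff P 0 ^ card S"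
      unfolding poly_prod by (simp add: poly_0_coeff_0 sc_coeff0)
    ultimately have "coeff P 0 ^ card S dvd coeff Q 0" using R0 by simp
    moreover have "t div n \<le> card S"
    proof -
      have "t \<le> n * card S" using tG S(2) by simp
      then have "t div n \<le> (n * card S) div n" by (rule div_le_mono)
      then show ?thesis using assms(7) by simp
    qed
    ultimately show ?thesis by (meson dvd_trans le_imp_power_dvd)
  qed
qed

end
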